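(* Let $\mathcal C$ be a concept hierarchy, $r_1,r_2,\epsilon\in[0,1]$, $a>0$ a real with $r_1\le ar_2(1-\epsilon)$, $m$ a positive integer, and let $\mathcal A_2$ and $\mathcal L$ be the networks defined below (with $\mathcal L$ having fixed sets $F$ and $E$ satisfying the stated constraints). Then $\mathcal L$ $implements_2$ $\mathcal A_2$: for every $B\subseteq C_0$, in the executions of $\mathcal A_2$ and $\mathcal L$ on input $B$, for every concept $c$, if $rep(c)$ does not fire at time $level(c)$ in $\mathcal A_2$, then no neuron in $reps(c)$ fires at time $level(c)$ in $\mathcal L$.
   Context: Concept hierarchies: fix positive integers $\ell_{max},n,k$. A universal set $D$ of concepts is partitioned into disjoint sets $D_0,\dots,D_{\ell_{max}}$ with $|D_0|=n$; $level(c)=\ell$ for $c\in D_\ell$. A concept hierarchy $\mathcal C$ consists of $C\subseteq D$, with $C_\ell=C\cap D_\ell$, and for each $c\in C_\ell$ with $1\le\ell\le\ell_{max}$ a set $children(c)\subseteq C_{\ell-1}$, such that $|C_{\ell_{max}}|=k$, $|children(c)|=k$ for all such $c$, and $children(c)\cap children(c')=\emptyset$ for distinct $c,c'\in C_\ell$. Common network dynamics: neurons partitioned into layers $N_0,\dots,N_{\ell_{max}}$; threshold $\tau$; weights $w(u,v)\in\{0,1\}$ for $u\in N_{\ell-1}$, $v\in N_\ell$. Failed neurons never fire. A non-failed neuron $v\in N_\ell$, $\ell\ge1$, does not fire at time 0 and fires at time $t\ge1$ iff $\sum_{u\in N_{\ell-1}}w(u,v)x_u(t-1)\ge\tau$,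 where $x_u(s)\in\{0,1\}$ indicates whether $u$ fires at time $s$. $\mathcal A_2$: no failures; each $c\in D_0$ has $rep(c)\in N_0$, each $c\in C$ with $level(c)\ge1$ has $rep(c)\in N_{level(c)}$, all distinct; $w(u,v)=1$ iff $v=rep(c)$, $u=rep(c')$ for a child $c'$ of $c$, else $0$; $\tau=r_1k$. Input $B\subseteq C_0$: the layer-0 neurons $rep(b)$, $b\in B$, fire at time 0, no other layer-0 neuron fires at time 0, and no layer-0 neuron fires at any other time. $\mathcal L$: each $c\in D_0$ has a set $reps(c)$ of $m$ neurons in $N_0$, each $c\in C$ with $level(c)\ge1$ a set $reps(c)$ of $m$ neurons in $N_{level(c)}$, all pairwise disjoint. $E$ is a set of pairs $(u,v)$ with $v\in reps(c)$ and $u\in reps(c')$ for some child $c'$ of $c$; $w(u,v)=1$ iff $(u,v)\in E$, else $0$. Threshold $\tau=ar_2km(1-\epsilon)$. A fixed set $F$ of neurons is failed. Constraints: for every concept $c$, at least $m(1-\epsilon)$ neurons of $reps(c)$ are not in $F$; and for every $c$ with $level(c)\ge1$, every $v\in reps(c)$ and every child $c'$ of $c$, there are at least $am(1-\epsilon)$ neurons $u\in reps(c')\setminus F$ with $(u,v)\in E$. Input $B\subseteq C_0$: a layer-0 neuron fires at time 0 iff it is in $\bigcup_{b\in B}reps(b)\setminus F$, and no layer-0 neuron fires at any other time. *)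

theory Defs
  imports Complex_Main
begin

definition concept_hierarchy ::
  "'c set \<Rightarrow> ('c \<Rightarrow> nat) \<Rightarrow> nat \<Rightarrow> nat \<Rightarrow> nat \<Rightarrow> 'c set \<Rightarrow> ('c \<Rightarrow> 'c set) \<Rightarrow> bool" where
  "concept_hierarchy D level lmax n k C children \<longleftrightarrow>
     lmax \<ge> 1 \<and> n \<ge> 1 \<and> k \<ge> 1 \<and>
     (\<forall>c\<in>D. level c \<le> lmax) \<and>
     finite {c\<in>D. level c = 0} \<and> card {c\<in>D. level c = 0} = n \<and>
     C \<subseteq> D \<and>
     finite {c\<in>C. level c = lmax} \<and> card {c\<in>C. level c = lmax} = k \<and>
     (\<forall>c\<in>C. 1 \<le> level c \<longrightarrow>
        children c \<subseteq> {c'\<in>C. level c' = level c - 1} \<and>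
        finite (children c) \<and> card (children c) = k) \<and>
     (\<forall>c\<in>C. \<forall>c'\<in>C. 1 \<le> level c \<longrightarrow> level c' = level c \<longrightarrow> c \<noteq> c' \<longrightarrow>
        children c \<inter> children c' = {})"

text \<open>A network: finite neuron set N, layer function lay, weights w, threshold tau,
  failed set F and the set I of layer-0 neurons that fire at time 0.
  fires ... v t holds iff neuron v fires at time t.\<close>

primrec fires ::
  "'n set \<Rightarrow> ('n \<Rightarrow> nat) \<Rightarrow> ('n \<Rightarrow> 'n \<Rightarrow> real) \<Rightarrow> real \<Rightarrow> 'n set \<Rightarrow> 'n set \<Rightarrow> 'n \<Rightarrow> nat \<Rightarrow> bool"
where
  "fires N lay w tau F I v 0 = (v \<in> N \<and> v \<notin> F \<and> lay v = 0 \<and> v \<in> I)"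
| "fires N lay w tau F I v (Suc t) =
     (v \<in> N \<and> v \<notin> F \<and> 1 \<le> lay v \<and>
      (\<Sum>u\<in>{u\<in>N. lay u + 1 = lay v}. w u v * (if fires N lay w tau F I u t then 1 else 0)) \<ge> tau)"

definition rep_concepts :: "'c set \<Rightarrow> ('c \<Rightarrow> nat) \<Rightarrow> 'c set \<Rightarrow> 'c set" where
  "rep_concepts D level C = {c\<in>D. level c = 0} \<union> {c\<in>C. 1 \<le> level c}"

definition A2_weight ::
  "('c \<Rightarrow> nat) \<Rightarrow> 'c set \<Rightarrow> ('c \<Rightarrow> 'c set) \<Rightarrow> ('c \<Rightarrow> 'n) \<Rightarrow> 'n \<Rightarrow> 'n \<Rightarrow> real" where
  "A2_weight level C children rep u v =
     (if \<exists>c\<in>C. 1 \<le> level c \<and> v = rep c \<and> (\<exists>c'\<in>children c. u = rep c') then 1 else 0)"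

definition L_weight :: "('n \<times> 'n) set \<Rightarrow> 'n \<Rightarrow> 'n \<Rightarrow> real" where
  "L_weight E u v = (if (u, v) \<in> E then 1 else 0)"

end

theory Submission
  imports Defs
begin

theorem theorem8p3:
  fixes D C :: "'c set" and level :: "'c \<Rightarrow> nat" and children :: "'c \<Rightarrow> 'c set"
    and lmax n k m :: nat and r1 r2 \<epsilon> a :: real
    and N1 :: "'n set" and lay1 :: "'n \<Rightarrow> nat" and rep :: "'c \<Rightarrow> 'n"
    and N2 :: "'m set" and lay2 :: "'m \<Rightarrow> nat" and reps :: "'c \<Rightarrow> 'm set"
    and E :: "('m \<times> 'm) set" and F :: "'m set"
  assumes hier: "concept_hierarchy D level lmax n k C children"
    and r1: "0 \<le> r1" "r1 \<le> 1" and r2: "0 \<le> r2" "r2 \<le> 1"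
    and eps: "0 \<le> \<epsilon>" "\<epsilon> \<le> 1"
    and a: "a > 0" and ra: "r1 \<le> a * r2 * (1 - \<epsilon>)"
    and m: "m \<ge> 1"
    \<comment> \<open>network A_2\<close>
    and N1_fin: "finite N1" and N1_lay: "\<forall>v\<in>N1. lay1 v \<le> lmax"
    and rep_in: "\<forall>c\<in>rep_concepts D level C. rep c \<in> N1 \<and> lay1 (rep c) = level c"
    and rep_inj: "inj_on rep (rep_concepts D level C)"
    \<comment> \<open>network L\<close>
    and N2_fin: "finite N2" and N2_lay: "\<forall>v\<in>N2. lay2 v \<le> lmax"
    and reps_in: "\<forall>c\<in>rep_concepts D level C.
                    reps c \<subseteq> N2 \<and> (\<forall>v\<in>reps c. lay2 v = level c) \<and> card (reps c) = m"
    and reps_disj: "\<forall>c\<in>rep_concepts D level C. \<forall>c'\<in>rep_concepts D level C.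
                    c \<noteq> c' \<longrightarrow> reps c \<inter> reps c' = {}"
    and E_sub: "E \<subseteq> {(u, v). \<exists>c\<in>C. 1 \<le> level c \<and> v \<in> reps c \<and>
                                     (\<exists>c'\<in>children c. u \<in> reps c')}"
    and F_sub: "F \<subseteq> N2"
    and F_bound: "\<forall>c\<in>rep_concepts D level C. real (card (reps c - F)) \<ge> real m * (1 - \<epsilon>)"
    and E_bound: "\<forall>c\<in>C. 1 \<le> level c \<longrightarrow> (\<forall>v\<in>reps c. \<forall>c'\<in>children c.
                    real (card {u\<in>reps c' - F. (u, v) \<in> E}) \<ge> a * real m * (1 - \<epsilon>))"
  shows "\<forall>B\<subseteq>{c\<in>C. level c = 0}. \<forall>c\<in>rep_concepts D level C.
           \<not> fires N1 lay1 (A2_weight level C children rep) (r1 * real k) {} (rep ` B)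
               (rep c) (level c)
           \<longrightarrow> (\<forall>v\<in>reps c. \<not> fires N2 lay2 (L_weight E) (a * r2 * real k * real m * (1 - \<epsilon>)) F
                              (\<Union>b\<in>B. reps b) v (level c))"
proof (intro allI impI ballI)
  fix B assume B: "B \<subseteq> {c\<in>C. level c = 0}"
  let ?RC = "rep_concepts D level C"
  let ?w1 = "A2_weight level C children rep"
  let ?f1 = "fires N1 lay1 ?w1 (r1 * real k) {} (rep ` B)"
  let ?tau = "a * r2 * real k * real m * (1 - \<epsilon>)"
  let ?f2 = "fires N2 lay2 (L_weight E) ?tau F (\<Union>b\<in>B. reps b)"
  have CD: "C \<subseteq> D" and chl: "\<And>c. c\<in>C \<Longrightarrow> 1 \<le> level c \<Longrightarrow>
        children c \<subseteq> {c'\<in>C. level c' = level c - 1} \<and> finite (children c)"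
    using hier unfolding concept_hierarchy_def by auto
  have RC0: "c \<in> ?RC" if "c \<in> C" for c
    using that CD unfolding rep_concepts_def by (cases "level c = 0") auto
  have BRC: "B \<subseteq> ?RC" using B RC0 by auto
  have main: "\<forall>c\<in>?RC. level c = l \<longrightarrow> \<not> ?f1 (rep c) l \<longrightarrow> (\<forall>v\<in>reps c. \<not> ?f2 v l)" for l
  proof (induction l)
    case 0
    show ?case
    proof (intro ballI impI)
      fix c v assume c: "c \<in> ?RC" "level c = 0" "\<not> ?f1 (rep c) 0" and v: "v \<in> reps c"
      have "rep c \<notin> rep ` B" using c rep_in by auto
      hence cB: "c \<notin> B" by auto
      show "\<not> ?f2 v 0"
      proof
        assume "?f2 v 0"
        then obtain b where b: "b \<in> B" "v \<in> reps b" by auto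
        have "b \<noteq> c" using b cB by auto
        thus False using reps_disj BRC b c v by blast
      qed
    qed
  next
    case (Suc l)
    show ?case
    proof (intro ballI impI)
      fix c v assume c: "c \<in> ?RC" "level c = Suc l" "\<not> ?f1 (rep c) (Suc l)" and v: "v \<in> reps c"
      have cC: "c \<in> C" using c unfolding rep_concepts_def by auto
      have ch: "children c \<subseteq> {c'\<in>C. level c' = l}" "finite (children c)"
        using chl[OF cC] c by auto
      have chRC: "children c \<subseteq> ?RC" using ch RC0 by auto
      define X where "X = {c'\<in>children c. ?f1 (rep c') l}"
      have Xfin: "finite X" using ch unfolding X_def by auto
      have XRC: "X \<subseteq> ?RC" using chRC X_def by auto
      define S1 where "S1 = {u\<in>N1. lay1 u + 1 = lay1 (rep c)}"
      have sum1: "\<not> (\<Sum>u\<in>S1. ?w1 u (rep c) * (if ?f1 u l then 1 else 0)) \<ge> r1 * real k"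
        using c rep_in unfolding S1_def by auto
      have sub1: "rep ` X \<subseteq> S1"
        using XRC rep_in ch c unfolding S1_def X_def by force
      have "real (card X) = real (card (rep ` X))"
        using rep_inj XRC by (simp add: card_image inj_on_subset)
      also have "\<dots> = (\<Sum>u\<in>rep ` X. ?w1 u (rep c) * (if ?f1 u l then 1 else 0))"
      proof -
        have "\<And>u. u \<in> rep ` X \<Longrightarrow> ?w1 u (rep c) * (if ?f1 u l then 1 else 0) = 1"
          using cC c unfolding X_def A2_weight_def by auto
        thus ?thesis by simp
      qed
      also have "\<dots> \<le> (\<Sum>u\<in>S1. ?w1 u (rep c) * (if ?f1 u l then 1 else 0))"
        by (rule sum_mono2) (use N1_fin sub1 in \<open>auto simp: S1_def A2_weight_def\<close>)
      finally have cardX: "real (card X) < r1 * real k" using sum1 by linarith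
      define U where "U = (\<Union>c'\<in>X. reps c')"
      define S2 where "S2 = {u\<in>N2. lay2 u + 1 = lay2 v}"
      have tmb: "L_weight E u v * (if ?f2 u l then 1 else 0) \<le> (if u \<in> U then 1 else 0)" for u
      proof (cases "(u, v) \<in> E \<and> ?f2 u l")
        case True
        then obtain c'' c' where cc: "c'' \<in> C" "1 \<le> level c''" "v \<in> reps c''" "c' \<in> children c''"
          "u \<in> reps c'" using E_sub by blast
        have "c'' = c" using reps_disj RC0[OF cc(1)] c(1) v cc(3) by blast
        hence c'ch: "c' \<in> children c" using cc by simp
        hence "c' \<in> ?RC" "level c' = l" using chRC ch by auto
        hence "?f1 (rep c') l" using Suc.IH cc(5) True by blast
        hence "u \<in> U" using c'ch cc(5) unfolding U_def X_def by blast
        thus ?thesis by (simp add: L_weight_def)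
      next
        case False
        thus ?thesis by (auto simp: L_weight_def)
      qed
      have repsfin: "\<And>c'. c' \<in> ?RC \<Longrightarrow> finite (reps c')"
        using reps_in m by (metis card.infinite not_one_le_zero)
      have "(\<Sum>u\<in>S2. L_weight E u v * (if ?f2 u l then 1 else 0)) \<le> (\<Sum>u\<in>S2. (if u \<in> U then 1 else 0::real))"
        by (rule sum_mono) (rule tmb)
      also have "\<dots> = real (card (S2 \<inter> U))"
        using N2_fin unfolding S2_def by (simp add: sum.If_cases Int_def)
      also have "\<dots> \<le> real (card U)"
      proof -
        have "finite U" using Xfin XRC repsfin unfolding U_def by auto
        thus ?thesis by (simp add: card_mono)
      qed
      also have "\<dots> \<le> real (\<Sum>c'\<in>X. card (reps c'))"
        unfolding U_def using card_UN_le[OF Xfin, of reps] by linarith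
      also have "\<dots> = real m * real (card X)"
      proof -
        have "(\<Sum>c'\<in>X. card (reps c')) = (\<Sum>c'\<in>X. m)"
          using reps_in XRC by (intro sum.cong) auto
        thus ?thesis by simp
      qed
      also have "\<dots> < real m * (r1 * real k)"
        using cardX m by simp
      also have "\<dots> \<le> ?tau"
      proof -
        have "r1 * (real k * real m) \<le> a * r2 * (1 - \<epsilon>) * (real k * real m)"
          by (rule mult_right_mono[OF ra]) simp
        thus ?thesis by (simp add: algebra_simps)
      qed
      finally show "\<not> ?f2 v (Suc l)" unfolding S2_def by auto
    qed
  qed
  fix c v assume "c \<in> ?RC" "\<not> ?f1 (rep c) (level c)" "v \<in> reps c"
  thus "\<not> ?f2 v (level c)" using main by blast
qed

end
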